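(* Let $b\ge 2$, $s,m\in\mathbb{N}$, let $C_1,\dots,C_s\in\mathbb{Z}_b^{\mathbb{N}\times m}$ and let $\mathcal{P}\subset G^s$ be the digital net with generating matrices $C_1,\dots,C_s$. Let $\mathcal{P}_{\Phi_b}:=\{\Phi_b(\boldsymbol z):\boldsymbol z\in\mathcal{P}\}$ be its folded digital net. Then $\mathcal{P}_{\Phi_b}$ is again a digital net in $G^s$, and its dual net satisfies $$\mathcal{P}_{\Phi_b}^{\perp}=\{\lfloor \boldsymbol k/b\rfloor:\ \boldsymbol k\in \mathcal{E}_0^s\cap \mathcal{P}^{\perp}\},$$ where $\lfloor \boldsymbol k/b\rfloor=(\lfloor k_1/b\rfloor,\dots,\lfloor k_s/b\rfloor)$ for $\boldsymbol k=(k_1,\dots,k_s)$.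
   Context: $b\ge 2$ is an integer, $\mathbb{Z}_b=\{0,\dots,b-1\}$ with addition mod $b$, and $G:=\prod_{i=1}^\infty\mathbb{Z}_b$ (infinite sequences $(\zeta_1,\zeta_2,\dots)^\top$ with coordinatewise addition mod $b$). A digital net in $G^s$ with generating matrices $C_1,\dots,C_s\in\mathbb{Z}_b^{\mathbb{N}\times m}$ (infinite-row matrices with $m$ columns; columns may have infinitely many nonzero entries) is $\mathcal{P}=\{\boldsymbol z_0,\dots,\boldsymbol z_{b^m-1}\}$, where for $0\le h<b^m$ with $b$-adic expansion $h=\sum_{i=0}^{m-1}\eta_ib^i$, $\boldsymbol z_h=(z_{h,1},\dots,z_{h,s})$ with $z_{h,j}=C_j(\eta_0,\dots,\eta_{m-1})^\top\in G$ (arithmetic mod $b$). Its dual net is $\mathcal{P}^\perp=\{\boldsymbol k\in\mathbb{N}_0^s: C_1^\top\vec k_1+\dots+C_s^\top\vec k_s=\boldsymbol 0\in\mathbb{Z}_b^m\}$, where for $k_j=\kappa_{0,j}+\kappa_{1,j}b+\cdots$ (finite $b$-adic expansion) $\vec k_j=(\kappa_{0,j},\kappa_{1,j},\dots)^\top$. The $b$-adic tent transformation $\Phi_b:G\to G$ is $\Phi_b((\zeta_1,\zeta_2,\dots)^\top)=(\eta_1,\eta_2,\dots)^\top$ with $\eta_i=\zeta_{i+1}-\zeta_1 \pmod b$, applied coordinatewise on $G^s$. For $k\in\mathbb{N}$ with $b$-adic digits $\kappa_0,\kappa_1,\dots$, $\delta(k)=\kappa_0+\kappa_1+\cdots$;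 $\mathcal{E}:=\{k\in\mathbb{N}:\delta(k)\equiv 0\pmod b\}$ and $\mathcal{E}_0:=\mathcal{E}\cup\{0\}$. *)

theory Defs
  imports Main
begin

text \<open>An element of G is a sequence z :: nat => nat with values in {0..<b},
  0-indexed: z i is the paper's zeta_(i+1). A generating matrix family is
  C :: nat => nat => nat => nat, where C j i r is the entry in row i (0-indexed, i.e. paper row i+1)
  and column r (0 <= r < m) of the matrix C_(j+1), for 0 <= j < s.
  Vectors in N_0^s are lists of length s.\<close>

definition digit :: "nat \<Rightarrow> nat \<Rightarrow> nat \<Rightarrow> nat" where
  "digit b k i = (k div b ^ i) mod b"

definition delta :: "nat \<Rightarrow> nat \<Rightarrow> nat" where
  "delta b k = (\<Sum>i | digit b k i \<noteq> 0. digit b k i)"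

definition Eset :: "nat \<Rightarrow> nat set" where
  "Eset b = {k. k \<ge> 1 \<and> delta b k mod b = 0}"

definition Eset0 :: "nat \<Rightarrow> nat set" where
  "Eset0 b = insert 0 (Eset b)"

text \<open>The point z_h of the digital net: coordinate j, digit i.\<close>
definition net_point :: "nat \<Rightarrow> nat \<Rightarrow> (nat \<Rightarrow> nat \<Rightarrow> nat \<Rightarrow> nat) \<Rightarrow> nat \<Rightarrow> nat \<Rightarrow> nat \<Rightarrow> nat" where
  "net_point b m C h j i = (\<Sum>r<m. C j i r * digit b h r) mod b"

definition tent :: "nat \<Rightarrow> (nat \<Rightarrow> nat) \<Rightarrow> nat \<Rightarrow> nat" where
  "tent b z i = nat ((int (z (Suc i)) - int (z 0)) mod int b)"

definition dual_net :: "nat \<Rightarrow> nat \<Rightarrow> nat \<Rightarrow> (nat \<Rightarrow> nat \<Rightarrow> nat \<Rightarrow> nat) \<Rightarrow> nat list set" where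
  "dual_net b m s C = {k. length k = s \<and>
     (\<forall>r<m. (\<Sum>j<s. \<Sum>i | digit b (k ! j) i \<noteq> 0. C j i r * digit b (k ! j) i) mod b = 0)}"

end

theory Submission
  imports Defs
begin

lemma digit_zero:
  assumes "b \<ge> 2" "k < b^N" "N \<le> i" shows "digit b k i = 0"
proof -
  have "b^N \<le> b^i" using assms by (simp add: power_increasing)
  then have "k < b^i" using assms by linarith
  then show ?thesis by (simp add: digit_def)
qed

lemma dsum_eq:
  assumes "b \<ge> 2" "k < b^N"
  shows "(\<Sum>i | digit b k i \<noteq> 0. g i * digit b k i) = (\<Sum>i<N. g i * digit b k i)"
proof (rule sum.mono_neutral_left)
  show "{i. digit b k i \<noteq> 0} \<subseteq> {..<N}"
  proof
    fix i assume "i \<in> {i. digit b k i \<noteq> 0}"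
    then show "i \<in> {..<N}" using digit_zero[OF assms, of i] by (cases "i < N") auto
  qed
qed auto

lemma fin_dig: assumes "b \<ge> 2" shows "finite {i. digit b k i \<noteq> 0}"
proof -
  have "k < 2^k" by (rule less_exp)
  also have "\<dots> \<le> b^k" using assms by (simp add: power_mono)
  finally have "k < b^k" .
  have "{i. digit b k i \<noteq> 0} \<subseteq> {..<k}"
  proof
    fix i assume "i \<in> {i. digit b k i \<noteq> 0}"
    then show "i \<in> {..<k}" using digit_zero[OF assms \<open>k < b^k\<close>, of i] by (cases "i < k") auto
  qed
  then show ?thesis by (rule finite_subset) auto
qed

lemma digit_shift0: "0 < b \<Longrightarrow> c < b \<Longrightarrow> digit b (b*k+c) 0 = c"
  by (simp add: digit_def)

lemma digit_shiftS: "0 < b \<Longrightarrow> c < b \<Longrightarrow> digit b (b*k+c) (Suc i) = digit b k i"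
proof -
  assume "0 < b" "c < b"
  then have "(b*k+c) div b = k" by simp
  then show ?thesis by (simp add: digit_def div_mult2_eq)
qed

lemma dsum_shift:
  assumes "b \<ge> 2" "c < b"
  shows "(\<Sum>i | digit b (b*k+c) i \<noteq> 0. g i * digit b (b*k+c) i)
       = g 0 * c + (\<Sum>i | digit b k i \<noteq> 0. g (Suc i) * digit b k i)"
proof -
  have "k < 2^k" by (rule less_exp)
  also have "\<dots> \<le> b^k" using assms by (simp add: power_mono)
  finally have k: "k < b^k" .
  have "b*k + c < b*(k+1)" using assms by simp
  also have "\<dots> \<le> b * b^k" using k by (intro mult_le_mono2) simp
  finally have k2: "b*k+c < b^Suc k" by simp
  have "(\<Sum>i | digit b (b*k+c) i \<noteq> 0. g i * digit b (b*k+c) i)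
      = (\<Sum>i<Suc k. g i * digit b (b*k+c) i)" by (rule dsum_eq[OF assms(1) k2])
  also have "\<dots> = g 0 * c + (\<Sum>i<k. g (Suc i) * digit b k i)"
    using assms by (simp add: sum.lessThan_Suc_shift digit_shift0 digit_shiftS del: sum.lessThan_Suc)
  also have "(\<Sum>i<k. g (Suc i) * digit b k i) = (\<Sum>i | digit b k i \<noteq> 0. g (Suc i) * digit b k i)"
    by (rule dsum_eq[OF assms(1) k, symmetric])
  finally show ?thesis .
qed

lemma delta_shift:
  assumes "b \<ge> 2" "c < b"
  shows "delta b (b*k+c) = c + delta b k"
  using dsum_shift[OF assms, of "\<lambda>_. 1" k] by (simp add: delta_def)

lemma delta_0: "delta b 0 = 0"
  by (simp add: delta_def digit_def)

definition Dmat :: "nat \<Rightarrow> (nat \<Rightarrow> nat \<Rightarrow> nat \<Rightarrow> nat) \<Rightarrow> nat \<Rightarrow> nat \<Rightarrow> nat \<Rightarrow> nat" where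
  "Dmat b C j i r = nat ((int (C j (Suc i) r) - int (C j 0 r)) mod int b)"

lemma Dmat_dvd: "b \<ge> 2 \<Longrightarrow> int b dvd (int (Dmat b C j i r) - (int (C j (Suc i) r) - int (C j 0 r)))"
  by (simp add: Dmat_def mod_eq_dvd_iff[symmetric])

lemma Dmat_lt: "b \<ge> 2 \<Longrightarrow> Dmat b C j i r < b"
  by (simp add: Dmat_def nat_less_iff)

lemma core_j:
  assumes "b \<ge> 2" "c < b" "b dvd (c + delta b k)"
  shows "int b dvd (int (\<Sum>i | digit b k i \<noteq> 0. Dmat b C j i r * digit b k i)
                  - int (\<Sum>i | digit b (b*k+c) i \<noteq> 0. C j i r * digit b (b*k+c) i))"
proof -
  let ?S = "{i. digit b k i \<noteq> 0}"
  have fin: "finite ?S" by (rule fin_dig[OF assms(1)])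
  have e: "int (\<Sum>i\<in>?S. Dmat b C j i r * digit b k i)
         - int (\<Sum>i | digit b (b*k+c) i \<noteq> 0. C j i r * digit b (b*k+c) i)
      = (\<Sum>i\<in>?S. (int (Dmat b C j i r) - (int (C j (Suc i) r) - int (C j 0 r))) * int (digit b k i))
        - int (C j 0 r) * (int c + int (delta b k))"
    unfolding dsum_shift[OF assms(1,2)] delta_def
    by (simp add: of_nat_sum algebra_simps sum_subtractf sum.distrib sum_distrib_left)
  have "int b dvd (\<Sum>i\<in>?S. (int (Dmat b C j i r) - (int (C j (Suc i) r) - int (C j 0 r))) * int (digit b k i))"
    by (intro dvd_sum dvd_mult2 Dmat_dvd assms(1))
  moreover have "int b dvd int (C j 0 r) * (int c + int (delta b k))"
    using assms(3) by (metis dvd_mult int_dvd_int_iff of_nat_add)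
  ultimately show ?thesis unfolding e by (rule dvd_diff)
qed

lemma nat_mod_eq_from_dvd:
  assumes "int b dvd (int A - int B)" shows "A mod b = B mod b"
proof -
  have "int A mod int b = int B mod int b" using assms by (simp add: mod_eq_dvd_iff)
  then have "int (A mod b) = int (B mod b)" by (simp add: of_nat_mod)
  then show ?thesis by simp
qed

lemma core_list:
  assumes b: "b \<ge> 2" and len: "length k = s" "length k' = s"
    and h: "\<forall>j<s. k!j = b*(k'!j) + c j \<and> c j < b \<and> b dvd (c j + delta b (k'!j))"
  shows "k' \<in> dual_net b m s (Dmat b C) \<longleftrightarrow> k \<in> dual_net b m s C"
proof -
  have "(\<Sum>j<s. \<Sum>i | digit b (k' ! j) i \<noteq> 0. Dmat b C j i r * digit b (k' ! j) i) mod b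
      = (\<Sum>j<s. \<Sum>i | digit b (k ! j) i \<noteq> 0. C j i r * digit b (k ! j) i) mod b" for r
  proof (rule nat_mod_eq_from_dvd)
    have "int (\<Sum>j<s. \<Sum>i | digit b (k' ! j) i \<noteq> 0. Dmat b C j i r * digit b (k' ! j) i)
        - int (\<Sum>j<s. \<Sum>i | digit b (k ! j) i \<noteq> 0. C j i r * digit b (k ! j) i)
        = (\<Sum>j<s. int (\<Sum>i | digit b (k' ! j) i \<noteq> 0. Dmat b C j i r * digit b (k' ! j) i)
        - int (\<Sum>i | digit b (k ! j) i \<noteq> 0. C j i r * digit b (k ! j) i))"
      by (simp only: of_nat_sum sum_subtractf)
    also have "int b dvd \<dots>"
    proof (rule dvd_sum)
      fix j assume "j \<in> {..<s}"
      then have "k!j = b*(k'!j) + c j" "c j < b" "b dvd (c j + delta b (k'!j))" using h by auto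
      then show "int b dvd (int (\<Sum>i | digit b (k' ! j) i \<noteq> 0. Dmat b C j i r * digit b (k' ! j) i)
        - int (\<Sum>i | digit b (k ! j) i \<noteq> 0. C j i r * digit b (k ! j) i))"
        using core_j[OF b, of "c j" "k'!j" C j r] by simp
    qed
    finally show "int b dvd (int (\<Sum>j<s. \<Sum>i | digit b (k' ! j) i \<noteq> 0. Dmat b C j i r * digit b (k' ! j) i)
        - int (\<Sum>j<s. \<Sum>i | digit b (k ! j) i \<noteq> 0. C j i r * digit b (k ! j) i))" .
  qed
  then show ?thesis using len unfolding dual_net_def by simp
qed

theorem lemma3p3:
  fixes b s m :: nat and C :: "nat \<Rightarrow> nat \<Rightarrow> nat \<Rightarrow> nat"
  assumes "b \<ge> 2" and "s \<ge> 1" and "m \<ge> 1"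
    and "\<forall>j<s. \<forall>i r. C j i r < b"
  shows "\<exists>D :: nat \<Rightarrow> nat \<Rightarrow> nat \<Rightarrow> nat.
           (\<forall>j<s. \<forall>i r. D j i r < b) \<and>
           (\<forall>h<b ^ m. \<forall>j<s. tent b (net_point b m C h j) = net_point b m D h j) \<and>
           dual_net b m s D =
             (\<lambda>k. map (\<lambda>x. x div b) k) `
               ({k. length k = s \<and> set k \<subseteq> Eset0 b} \<inter> dual_net b m s C)"
proof (intro exI conjI allI impI)
  have b: "b \<ge> 2" by fact
  show "Dmat b C j i r < b" for j i r using Dmat_lt[OF b] .
  show "tent b (net_point b m C h j) = net_point b m (Dmat b C) h j" for h j
  proof
    fix i
    let ?S1 = "\<Sum>r<m. C j (Suc i) r * digit b h r"
    let ?S0 = "\<Sum>r<m. C j 0 r * digit b h r"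
    let ?X = "\<Sum>r<m. Dmat b C j i r * digit b h r"
    have "int ?X - (int ?S1 - int ?S0)
       = (\<Sum>r<m. (int (Dmat b C j i r) - (int (C j (Suc i) r) - int (C j 0 r))) * int (digit b h r))"
      by (simp add: of_nat_sum sum_subtractf sum.distrib algebra_simps)
    also have "int b dvd \<dots>"
      by (intro dvd_sum dvd_mult2 Dmat_dvd b)
    finally have "int ?X mod int b = (int ?S1 - int ?S0) mod int b"
      by (simp add: mod_eq_dvd_iff)
    then have "int (?X mod b) = (int (?S1 mod b) - int (?S0 mod b)) mod int b"
      by (simp add: of_nat_mod mod_diff_eq)
    then show "tent b (net_point b m C h j) i = net_point b m (Dmat b C) h j i"
      unfolding tent_def net_point_def by (metis nat_int)
  qed
  show "dual_net b m s (Dmat b C) =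
             (\<lambda>k. map (\<lambda>x. x div b) k) `
               ({k. length k = s \<and> set k \<subseteq> Eset0 b} \<inter> dual_net b m s C)"
  proof
    show "dual_net b m s (Dmat b C) \<subseteq> (\<lambda>k. map (\<lambda>x. x div b) k) `
               ({k. length k = s \<and> set k \<subseteq> Eset0 b} \<inter> dual_net b m s C)"
    proof
      fix k' assume k': "k' \<in> dual_net b m s (Dmat b C)"
      then have len': "length k' = s" by (simp add: dual_net_def)
      define cc where "cc x = (b - delta b x mod b) mod b" for x
      have cc_lt: "cc x < b" for x using b by (simp add: cc_def)
      have cc_dvd: "b dvd (cc x + delta b x)" for x
      proof -
        have "(cc x + delta b x) mod b = ((b - delta b x mod b) + delta b x mod b) mod b"
          unfolding cc_def by (metis mod_add_eq mod_mod_trivial)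
        also have "\<dots> = 0" using b by simp
        finally show ?thesis by (simp add: dvd_eq_mod_eq_0)
      qed
      define k where "k = map (\<lambda>x. b*x + cc x) k'"
      have len: "length k = s" using len' by (simp add: k_def)
      have h: "\<forall>j<s. k!j = b*(k'!j) + cc (k'!j) \<and> cc (k'!j) < b \<and> b dvd (cc (k'!j) + delta b (k'!j))"
        using len' cc_lt cc_dvd by (simp add: k_def)
      have "k \<in> dual_net b m s C" using core_list[OF b len len' h] k' by simp
      moreover have "set k \<subseteq> Eset0 b"
      proof
        fix y assume "y \<in> set k"
        then obtain x where y: "y = b*x + cc x" by (auto simp: k_def)
        have "delta b y mod b = 0" using y delta_shift[OF b cc_lt] cc_dvd
          by (simp add: dvd_eq_mod_eq_0)
        then show "y \<in> Eset0 b" by (cases "y = 0") (auto simp: Eset0_def Eset_def)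
      qed
      moreover have "k' = map (\<lambda>x. x div b) k"
        using b cc_lt by (simp add: k_def map_idI)
      ultimately show "k' \<in> (\<lambda>k. map (\<lambda>x. x div b) k) `
               ({k. length k = s \<and> set k \<subseteq> Eset0 b} \<inter> dual_net b m s C)"
        using len by blast
    qed
  next
    show "(\<lambda>k. map (\<lambda>x. x div b) k) `
               ({k. length k = s \<and> set k \<subseteq> Eset0 b} \<inter> dual_net b m s C) \<subseteq> dual_net b m s (Dmat b C)"
    proof
      fix k' assume "k' \<in> (\<lambda>k. map (\<lambda>x. x div b) k) `
               ({k. length k = s \<and> set k \<subseteq> Eset0 b} \<inter> dual_net b m s C)"
      then obtain k where kk: "k' = map (\<lambda>x. x div b) k" and len: "length k = s"
        and E: "set k \<subseteq> Eset0 b" and kd: "k \<in> dual_net b m s C" by blast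
      have len': "length k' = s" using kk len by simp
      have h: "\<forall>j<s. k!j = b*(k'!j) + (k!j) mod b \<and> (k!j) mod b < b \<and> b dvd ((k!j) mod b + delta b (k'!j))"
      proof (intro allI impI conjI)
        fix j assume j: "j < s"
        show e: "k!j = b*(k'!j) + (k!j) mod b" using kk len j by simp
        show lt: "(k!j) mod b < b" using b by simp
        have "k!j \<in> Eset0 b" using E j len by auto
        then have "delta b (k!j) mod b = 0" by (auto simp: Eset0_def Eset_def delta_0)
        moreover have "delta b (k!j) = (k!j) mod b + delta b (k'!j)"
          using delta_shift[OF b lt, of "k'!j"] e by simp
        ultimately show "b dvd ((k!j) mod b + delta b (k'!j))" by (simp add: dvd_eq_mod_eq_0)
      qed
      show "k' \<in> dual_net b m s (Dmat b C)" using core_list[OF b len len' h] kd by simp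
    qed
  qed
qed

end
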